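(* Let $\mathfrak{A}$ be a $(k,p,q)$-differential subalgebra of some $C^*$-algebra, fix $\tau$ with $1>\tau>\log_k(\max\{k-1,p\})$, and let $f\in\mathfrak{D}_\tau$ satisfy $f(0)=0$ and $f(1)=1$. Suppose $(b_\alpha)_\alpha\subseteq\mathfrak{A}$ is a self-adjoint bounded (two-sided) approximate identity of $\mathfrak{A}$. Then $\lim_\alpha\|f(b_\alpha)a-a\|_{\mathfrak{A}}=0$ for all $a\in\mathfrak{A}$.
   Context: A $(k,p,q)$-differential subalgebra of a $C^*$-algebra $\mathfrak{B}$ (with norm $\|\cdot\|_{\mathfrak{B}}$) is a $*$-subalgebra $\mathfrak{A}\subseteq\mathfrak{B}$ equipped with its own norm $\|\cdot\|_{\mathfrak{A}}$ making it a Banach $*$-algebra on which the involution is continuous, where $k\in\mathbb{Z}$, $k\geq 2$, and $p,q>0$ are reals with $p+q=k$, such that for some constant $C>0$, $\|a^k\|_{\mathfrak{A}}\leq C\|a\|_{\mathfrak{A}}^p\|a\|_{\mathfrak{B}}^q$ for all $a\in\mathfrak{A}$. The Fourier transform is $\widehat{f}(t)=\int_{\mathbb{R}}f(x)e^{-itx}dx$. For $\tau\in(0,1)$, $\mathfrak{D}_\tau$ is the Banach algebra of functions $f(x)=\frac{1}{2\pi}\int_{\mathbb{R}}\widehat{f}(t)e^{itx}dt$ with $\widehat f\in L^1(\mathbb{R})$ and $\int_{\mathbb{R}}|\widehat{f}(t)|e^{|t|^\tau}dt<\infty$; for $b=b^*\in\mathfrak{A}$ and $f\in\mathfrak{D}_\tau$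 with $f(0)=0$, $f(b)=\frac{1}{2\pi}\int_{\mathbb{R}}\widehat{f}(t)e^{itb}dt\in\mathfrak{A}$ (a Bochner integral in the unitization of $\mathfrak{A}$). *)

theory Defs
  imports "HOL-Analysis.Analysis"
begin

text \<open>A complex algebra structure on a real normed algebra, given by an explicit
  complex scalar multiplication compatible with the real one.\<close>
definition cplx_alg :: "(complex \<Rightarrow> 'a::real_normed_algebra \<Rightarrow> 'a) \<Rightarrow> bool" where
  "cplx_alg sc \<longleftrightarrow>
     (\<forall>r x. sc (complex_of_real r) x = scaleR r x) \<and>
     (\<forall>z w x. sc (z * w) x = sc z (sc w x)) \<and>
     (\<forall>z w x. sc (z + w) x = sc z x + sc w x) \<and>
     (\<forall>z x y. sc z (x + y) = sc z x + sc z y) \<and>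
     (\<forall>z x y. sc z (x * y) = sc z x * y) \<and>
     (\<forall>z x y. sc z (x * y) = x * sc z y) \<and>
     (\<forall>z x. norm (sc z x) = cmod z * norm x)"

definition involution :: "(complex \<Rightarrow> 'a::real_normed_algebra \<Rightarrow> 'a) \<Rightarrow> ('a \<Rightarrow> 'a) \<Rightarrow> bool" where
  "involution sc st \<longleftrightarrow>
     (\<forall>x. st (st x) = x) \<and>
     (\<forall>x y. st (x + y) = st x + st y) \<and>
     (\<forall>z x. st (sc z x) = sc (cnj z) (st x)) \<and>
     (\<forall>x y. st (x * y) = st y * st x)"

text \<open>Banach *-algebra with continuous involution (the norm is the type's norm,
  completeness comes from the class banach, submultiplicativity from real_normed_algebra).\<close>
definition banach_star_algebra ::
  "(complex \<Rightarrow> 'a::{banach,real_normed_algebra} \<Rightarrow> 'a) \<Rightarrow> ('a \<Rightarrow> 'a) \<Rightarrow> bool" where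
  "banach_star_algebra sc st \<longleftrightarrow> cplx_alg sc \<and> involution sc st \<and> continuous_on UNIV st"

definition C_star_algebra ::
  "(complex \<Rightarrow> 'b::{banach,real_normed_algebra} \<Rightarrow> 'b) \<Rightarrow> ('b \<Rightarrow> 'b) \<Rightarrow> bool" where
  "C_star_algebra sc st \<longleftrightarrow> banach_star_algebra sc st \<and> (\<forall>x. norm (st x * x) = norm x ^ 2)"

text \<open>The *-subalgebra A of B is represented by an injective *-homomorphism \<iota> : A \<rightarrow> B
  (identifying A with its image); \<open>norm (\<iota> a)\<close> is the B-norm of a.\<close>
definition star_embedding ::
  "(complex \<Rightarrow> 'a::real_normed_algebra \<Rightarrow> 'a) \<Rightarrow> ('a \<Rightarrow> 'a) \<Rightarrow>
   (complex \<Rightarrow> 'b::real_normed_algebra \<Rightarrow> 'b) \<Rightarrow> ('b \<Rightarrow> 'b) \<Rightarrow> ('a \<Rightarrow> 'b) \<Rightarrow> bool" where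
  "star_embedding scA stA scB stB \<iota> \<longleftrightarrow>
     inj \<iota> \<and>
     (\<forall>x y. \<iota> (x + y) = \<iota> x + \<iota> y) \<and>
     (\<forall>z x. \<iota> (scA z x) = scB z (\<iota> x)) \<and>
     (\<forall>x y. \<iota> (x * y) = \<iota> x * \<iota> y) \<and>
     (\<forall>x. \<iota> (stA x) = stB (\<iota> x))"

text \<open>Positive powers in a possibly non-unital algebra: \<open>pw a n = a^(n+1)\<close>.\<close>
primrec pw :: "'a::times \<Rightarrow> nat \<Rightarrow> 'a" where
  "pw a 0 = a"
| "pw a (Suc n) = pw a n * a"

definition kpq_differential_subalgebra ::
  "nat \<Rightarrow> real \<Rightarrow> real \<Rightarrow>
   (complex \<Rightarrow> 'a::{banach,real_normed_algebra} \<Rightarrow> 'a) \<Rightarrow> ('a \<Rightarrow> 'a) \<Rightarrow>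
   (complex \<Rightarrow> 'b::{banach,real_normed_algebra} \<Rightarrow> 'b) \<Rightarrow> ('b \<Rightarrow> 'b) \<Rightarrow> ('a \<Rightarrow> 'b) \<Rightarrow> bool" where
  "kpq_differential_subalgebra k p q scA stA scB stB \<iota> \<longleftrightarrow>
     k \<ge> 2 \<and> p > 0 \<and> q > 0 \<and> p + q = real k \<and>
     C_star_algebra scB stB \<and> banach_star_algebra scA stA \<and>
     star_embedding scA stA scB stB \<iota> \<and>
     (\<exists>C>0. \<forall>a. norm (pw a (k - 1)) \<le> C * norm a powr p * norm (\<iota> a) powr q)"

text \<open>\<open>g\<close> plays the role of the Fourier transform \<open>f^\<close>; \<open>inv_fourier g\<close> is f.\<close>
definition inv_fourier :: "(real \<Rightarrow> complex) \<Rightarrow> real \<Rightarrow> complex" where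
  "inv_fourier g x = (1 / (2 * pi)) * (LINT t|lborel. g t * exp (\<i> * complex_of_real t * complex_of_real x))"

definition D_tau :: "real \<Rightarrow> (real \<Rightarrow> complex) \<Rightarrow> bool" where
  "D_tau \<tau> g \<longleftrightarrow> integrable lborel g \<and>
     integrable lborel (\<lambda>t. cmod (g t) * exp (\<bar>t\<bar> powr \<tau>))"

definition expm1_A :: "(complex \<Rightarrow> 'a::{banach,real_normed_algebra} \<Rightarrow> 'a) \<Rightarrow> complex \<Rightarrow> 'a \<Rightarrow> 'a" where
  "expm1_A sc z b = (\<Sum>n. scaleR (1 / fact (Suc n)) (pw (sc z b) n))"

text \<open>\<open>f(b) = 1/(2\<pi>) \<integral> f^(t) e^(itb) dt\<close>; since \<open>\<integral> f^ = 2\<pi> f(0) = 0\<close>, the unit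
  part of \<open>e^(itb)\<close> contributes nothing, so \<open>f(b) = 1/(2\<pi>) \<integral> f^(t) (e^(itb) - 1) dt\<close>.\<close>
definition fcalc :: "(complex \<Rightarrow> 'a::{banach,real_normed_algebra} \<Rightarrow> 'a) \<Rightarrow> (real \<Rightarrow> complex) \<Rightarrow> 'a \<Rightarrow> 'a" where
  "fcalc sc g b = scaleR (1 / (2 * pi))
     (integral UNIV (\<lambda>t::real. sc (g t) (expm1_A sc (\<i> * complex_of_real t) b)))"

definition directed :: "('i \<Rightarrow> 'i \<Rightarrow> bool) \<Rightarrow> bool" where
  "directed le \<longleftrightarrow> (\<forall>x. le x x) \<and> (\<forall>x y z. le x y \<longrightarrow> le y z \<longrightarrow> le x z) \<and>
     (\<forall>x y. \<exists>z. le x z \<and> le y z)"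

definition net_lim :: "('i \<Rightarrow> 'i \<Rightarrow> bool) \<Rightarrow> ('i \<Rightarrow> real) \<Rightarrow> real \<Rightarrow> bool" where
  "net_lim le h L \<longleftrightarrow> (\<forall>\<epsilon>>0. \<exists>\<alpha>0. \<forall>\<alpha>. le \<alpha>0 \<alpha> \<longrightarrow> \<bar>h \<alpha> - L\<bar> < \<epsilon>)"

definition bounded_approx_identity ::
  "('i \<Rightarrow> 'i \<Rightarrow> bool) \<Rightarrow> ('i \<Rightarrow> 'a::real_normed_algebra) \<Rightarrow> bool" where
  "bounded_approx_identity le b \<longleftrightarrow> directed le \<and> (\<exists>M. \<forall>\<alpha>. norm (b \<alpha>) \<le> M) \<and>
     (\<forall>a. net_lim le (\<lambda>\<alpha>. norm (b \<alpha> * a - a)) 0 \<and> net_lim le (\<lambda>\<alpha>. norm (a * b \<alpha> - a)) 0)"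

end

theory Submission
  imports Defs
begin


typedef 'a ue = "UNIV :: (real \<times> 'a) set" morphisms rep_ue Abs_ue by auto
setup_lifting type_definition_ue

instantiation ue :: (real_normed_algebra) "{zero,one,plus,minus,uminus,scaleR,times,norm}"
begin
lift_definition zero_ue :: "'a ue" is "(0,0)" .
lift_definition one_ue :: "'a ue" is "(1,0)" .
lift_definition plus_ue :: "'a ue \<Rightarrow> 'a ue \<Rightarrow> 'a ue" is "\<lambda>(r,x) (s,y). (r+s, x+y)" .
lift_definition minus_ue :: "'a ue \<Rightarrow> 'a ue \<Rightarrow> 'a ue" is "\<lambda>(r,x) (s,y). (r-s, x-y)" .
lift_definition uminus_ue :: "'a ue \<Rightarrow> 'a ue" is "\<lambda>(r,x). (-r, -x)" .
lift_definition scaleR_ue :: "real \<Rightarrow> 'a ue \<Rightarrow> 'a ue" is "\<lambda>c (r,x). (c*r, c *\<^sub>R x)" .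
lift_definition times_ue :: "'a ue \<Rightarrow> 'a ue \<Rightarrow> 'a ue" is
  "\<lambda>(r,x) (s,y). (r * s, scaleR r y + scaleR s x + x * y)" .
lift_definition norm_ue :: "'a ue \<Rightarrow> real" is "\<lambda>(r,x). \<bar>r\<bar> + norm x" .
instance ..
end

instantiation ue :: (real_normed_algebra) real_normed_algebra_1
begin
definition sgn_ue :: "'a ue \<Rightarrow> 'a ue" where "sgn_ue x = x /\<^sub>R norm x"
definition dist_ue :: "'a ue \<Rightarrow> 'a ue \<Rightarrow> real" where "dist_ue x y = norm (x - y)"
definition uniformity_ue :: "('a ue \<times> 'a ue) filter" where
  "uniformity_ue = (INF e\<in>{0 <..}. principal {(x, y). dist x y < e})"
definition open_ue :: "'a ue set \<Rightarrow> bool" where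
  "open_ue U = (\<forall>x\<in>U. eventually (\<lambda>(x', y). x' = x \<longrightarrow> y \<in> U) uniformity)"
instance
proof
  fix a b c :: "'a ue" and r s :: real
  show "a + b + c = a + (b + c)" by transfer auto
  show "a + b = b + a" by transfer auto
  show "0 + a = a" by transfer auto
  show "- a + a = 0" by transfer auto
  show "a - b = a + - b" by transfer auto
  show "r *\<^sub>R (a + b) = r *\<^sub>R a + r *\<^sub>R b" by transfer (auto simp: algebra_simps)
  show "(r + s) *\<^sub>R a = r *\<^sub>R a + s *\<^sub>R a" by transfer (auto simp: algebra_simps)
  show "r *\<^sub>R s *\<^sub>R a = (r * s) *\<^sub>R a" by transfer (auto simp: algebra_simps)
  show "1 *\<^sub>R a = a" by transfer auto
  show "a * b * c = a * (b * c)" by transfer (auto simp: algebra_simps)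
  show "(a + b) * c = a * c + b * c" by transfer (auto simp: algebra_simps)
  show "a * (b + c) = a * b + a * c" by transfer (auto simp: algebra_simps)
  show "r *\<^sub>R a * b = r *\<^sub>R (a * b)" by transfer (auto simp: algebra_simps)
  show "a * r *\<^sub>R b = r *\<^sub>R (a * b)" by transfer (auto simp: algebra_simps)
  show "1 * a = a" by transfer auto
  show "a * 1 = a" by transfer auto
  show "(0::'a ue) \<noteq> 1" by transfer auto
  show "sgn a = a /\<^sub>R norm a" by (simp add: sgn_ue_def)
  show "dist a b = norm (a - b)" by (simp add: dist_ue_def)
  show "(uniformity :: ('a ue \<times> 'a ue) filter) = (INF e\<in>{0 <..}. principal {(x, y). dist x y < e})"
    by (simp add: uniformity_ue_def)
  show "open U = (\<forall>x\<in>U. eventually (\<lambda>(x', y). x' = x \<longrightarrow> y \<in> U) uniformity)" for U :: "'a ue set"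
    by (simp add: open_ue_def)
  show "(norm a = 0) = (a = 0)" by transfer (auto, smt (verit) norm_ge_zero, smt (verit) norm_ge_zero norm_eq_zero)
  show "norm (a + b) \<le> norm a + norm b" apply transfer
    apply auto
    by (smt (verit, best) norm_triangle_ineq)
  show "norm (r *\<^sub>R a) = \<bar>r\<bar> * norm a" by transfer (auto simp: abs_mult algebra_simps)
  show "norm (a * b) \<le> norm a * norm b" apply transfer
  proof clarify
    fix r s :: real and x y :: 'a
    have "norm (r *\<^sub>R y + s *\<^sub>R x + x * y) \<le> \<bar>r\<bar> * norm y + \<bar>s\<bar> * norm x + norm x * norm y"
      by (smt (verit) norm_mult_ineq norm_scaleR norm_triangle_ineq)
    then show "\<bar>r * s\<bar> + norm (r *\<^sub>R y + s *\<^sub>R x + x * y) \<le> (\<bar>r\<bar> + norm x) * (\<bar>s\<bar> + norm y)"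
      by (simp add: abs_mult algebra_simps)
  qed
  show "norm (1::'a ue) = 1" by transfer auto
qed
end


lift_definition ue_fst :: "'a::real_normed_algebra ue \<Rightarrow> real" is fst .
lift_definition ue_snd :: "'a::real_normed_algebra ue \<Rightarrow> 'a" is snd .
lift_definition ue_mk :: "real \<Rightarrow> 'a::real_normed_algebra \<Rightarrow> 'a ue" is "\<lambda>r x. (r,x)" .

lemma ue_norm_eq: "norm X = \<bar>ue_fst X\<bar> + norm (ue_snd X)"
  by transfer auto
lemma ue_fst_diff: "ue_fst (X - Y) = ue_fst X - ue_fst Y" by transfer auto
lemma ue_snd_diff: "ue_snd (X - Y) = ue_snd X - ue_snd Y" by transfer auto
lemma ue_mk_diff: "X - ue_mk r x = ue_mk (ue_fst X - r) (ue_snd X - x)" by transfer auto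

instance ue :: ("{banach,real_normed_algebra}") banach
proof
  fix X :: "nat \<Rightarrow> 'a ue"
  assume C: "Cauchy X"
  have C1: "Cauchy (\<lambda>n. ue_fst (X n))" unfolding Cauchy_iff
  proof (intro allI impI)
    fix e :: real assume "e > 0"
    then obtain M where M: "\<forall>m\<ge>M. \<forall>n\<ge>M. norm (X m - X n) < e" using C unfolding Cauchy_iff by blast
    show "\<exists>M. \<forall>m\<ge>M. \<forall>n\<ge>M. norm (ue_fst (X m) - ue_fst (X n)) < e"
      apply (rule exI[of _ M]) proof (intro allI impI)
        fix m n assume "M \<le> m" "M \<le> n"
        then have "norm (X m - X n) < e" using M by auto
        then show "norm (ue_fst (X m) - ue_fst (X n)) < e" unfolding ue_norm_eq ue_fst_diff
          by (smt (verit) norm_ge_zero real_norm_def)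
      qed
  qed
  have C2: "Cauchy (\<lambda>n. ue_snd (X n))" unfolding Cauchy_iff
  proof (intro allI impI)
    fix e :: real assume "e > 0"
    then obtain M where M: "\<forall>m\<ge>M. \<forall>n\<ge>M. norm (X m - X n) < e" using C unfolding Cauchy_iff by blast
    show "\<exists>M. \<forall>m\<ge>M. \<forall>n\<ge>M. norm (ue_snd (X m) - ue_snd (X n)) < e"
      apply (rule exI[of _ M]) proof (intro allI impI)
        fix m n assume "M \<le> m" "M \<le> n"
        then have "norm (X m - X n) < e" using M by auto
        then show "norm (ue_snd (X m) - ue_snd (X n)) < e" unfolding ue_norm_eq ue_snd_diff
          by (smt (verit) abs_ge_zero)
      qed
  qed
  obtain r where r: "(\<lambda>n. ue_fst (X n)) \<longlonglongrightarrow> r" using C1 Cauchy_convergent_iff convergent_def by blast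
  obtain x where x: "(\<lambda>n. ue_snd (X n)) \<longlonglongrightarrow> x" using C2 Cauchy_convergent_iff convergent_def by blast
  have "X \<longlonglongrightarrow> ue_mk r x" unfolding LIMSEQ_iff
  proof (intro allI impI)
    fix e :: real assume e: "e > 0"
    obtain n1 where n1: "\<forall>n\<ge>n1. norm (ue_fst (X n) - r) < e/2" using r e unfolding LIMSEQ_iff
      by (meson half_gt_zero)
    obtain n2 where n2: "\<forall>n\<ge>n2. norm (ue_snd (X n) - x) < e/2" using x e unfolding LIMSEQ_iff
      by (meson half_gt_zero)
    show "\<exists>no. \<forall>n\<ge>no. norm (X n - ue_mk r x) < e"
    proof (intro exI allI impI)
      fix n assume "max n1 n2 \<le> n"
      then have a: "\<bar>ue_fst (X n) - r\<bar> < e/2" and b: "norm (ue_snd (X n) - x) < e/2"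
        using n1 n2 by auto
      have "norm (X n - ue_mk r x) = \<bar>ue_fst (X n) - r\<bar> + norm (ue_snd (X n) - x)"
        unfolding ue_mk_diff ue_norm_eq by transfer auto
      then show "norm (X n - ue_mk r x) < e" using a b by linarith
    qed
  qed
  then show "convergent X" unfolding convergent_def by blast
qed




definition Ex :: "'a::{banach,real_normed_algebra} \<Rightarrow> 'a" where
  "Ex x = (\<Sum>n. (1 / fact (Suc n)) *\<^sub>R pw x n)"

lemma expm1_A_eq: "expm1_A sc z b = Ex (sc z b)" by (simp add: expm1_A_def Ex_def)

lemma norm_pw: "norm (pw (x::'a::real_normed_algebra) n) \<le> norm x ^ Suc n"
proof (induction n)
  case 0 then show ?case by simp
next
  case (Suc n)
  have "norm (pw x (Suc n)) \<le> norm (pw x n) * norm x" by (simp add: norm_mult_ineq)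
  also have "\<dots> \<le> norm x ^ Suc n * norm x" using Suc by (simp add: mult_right_mono)
  finally show ?case by (simp add: mult.commute)
qed

lemma exp_m1_sums: "(\<lambda>n. y ^ Suc n / fact (Suc n)) sums (exp y - 1)" for y :: real
proof -
  have "(\<lambda>n. y ^ n /\<^sub>R fact n) sums exp y" by (rule exp_converges)
  then have "(\<lambda>n. y ^ n / fact n) sums exp y" by (simp add: divide_inverse mult.commute)
  then show ?thesis using sums_Suc_iff[of "\<lambda>n. y ^ n / fact n"] by simp
qed

lemma summable_Ex: "summable (\<lambda>n. norm ((1 / fact (Suc n)) *\<^sub>R pw (x::'a::{banach,real_normed_algebra}) n))"
proof (rule summable_comparison_test[OF _ sums_summable[OF exp_m1_sums[of "norm x"]]])
  show "\<exists>N. \<forall>n\<ge>N. norm (norm ((1 / fact (Suc n)) *\<^sub>R pw x n)) \<le> norm x ^ Suc n / fact (Suc n)"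
    using norm_pw[of x] by (auto intro!: exI[of _ 0] divide_right_mono simp: divide_inverse mult.commute simp del: fact_Suc)
qed

lemma norm_Ex_le: "norm (Ex (x::'a::{banach,real_normed_algebra})) \<le> exp (norm x) - 1"
proof -
  have "norm (Ex x) \<le> (\<Sum>n. norm ((1 / fact (Suc n)) *\<^sub>R pw x n))"
    unfolding Ex_def by (rule summable_norm[OF summable_Ex])
  also have "\<dots> \<le> (\<Sum>n. norm x ^ Suc n / fact (Suc n))"
    apply (rule suminf_le[OF _ summable_Ex sums_summable[OF exp_m1_sums]])
    using norm_pw[of x] by (auto intro!: divide_right_mono simp: divide_inverse mult.commute simp del: fact_Suc)
  also have "\<dots> = exp (norm x) - 1" using exp_m1_sums sums_unique by metis
  finally show ?thesis .
qed

lemma bl_mk0: "bounded_linear (ue_mk 0 :: 'a::real_normed_algebra \<Rightarrow> 'a ue)"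
proof (rule bounded_linear_intro[where K=1])
  show "ue_mk 0 (x + y) = ue_mk 0 x + ue_mk 0 y" for x y :: 'a by transfer auto
  show "ue_mk 0 (r *\<^sub>R x) = r *\<^sub>R ue_mk 0 x" for r and x :: 'a by transfer auto
  show "norm (ue_mk 0 x) \<le> norm x * 1" for x :: 'a by transfer auto
qed

lemma mk0_mult: "ue_mk 0 x * ue_mk 0 y = ue_mk 0 (x * y)" by transfer auto
lemma pw_comm: "x * pw x n = pw x n * (x::'a::real_normed_algebra)"
  by (induction n) (auto simp: mult.assoc[symmetric])
lemma mk0_pow: "(ue_mk 0 x) ^ Suc n = ue_mk 0 (pw x n)"
  by (induction n) (auto simp: mk0_mult pw_comm)
lemma mk0_inj: "ue_mk 0 x = ue_mk 0 y \<Longrightarrow> x = y" by transfer auto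
lemma mk0_add: "ue_mk 0 (x + y) = ue_mk 0 x + ue_mk 0 y" by transfer auto
lemma mk0_scaleR: "ue_mk 0 (r *\<^sub>R x) = r *\<^sub>R ue_mk 0 x" by transfer auto
lemma one_plus_mk0_mult: "(1 + ue_mk 0 x) * (1 + ue_mk 0 y) = 1 + ue_mk 0 (x + y + x * y)"
  by transfer auto

lemma exp_mk0: "exp (ue_mk 0 x) = 1 + ue_mk 0 (Ex (x::'a::{banach,real_normed_algebra}))"
proof -
  have s1: "(\<lambda>n. ue_mk 0 x ^ n /\<^sub>R fact n) sums exp (ue_mk 0 x)" by (rule exp_converges)
  have s2: "(\<lambda>n. ue_mk 0 ((1 / fact (Suc n)) *\<^sub>R pw x n)) sums ue_mk 0 (Ex x)"
    unfolding Ex_def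
    by (rule bounded_linear.sums[OF bl_mk0 summable_sums[OF summable_norm_cancel[OF summable_Ex]]])
  have "(\<lambda>n. ue_mk 0 x ^ Suc n /\<^sub>R fact (Suc n)) = (\<lambda>n. ue_mk 0 ((1 / fact (Suc n)) *\<^sub>R pw x n))"
    using mk0_pow[of x] by (auto simp: mk0_scaleR divide_inverse_commute simp del: fact_Suc power_Suc)
  with s1 sums_Suc_iff[of "\<lambda>n. ue_mk 0 x ^ n /\<^sub>R fact n"]
  have "(\<lambda>n. ue_mk 0 ((1 / fact (Suc n)) *\<^sub>R pw x n)) sums (exp (ue_mk 0 x) - 1)" by simp
  with s2 have "exp (ue_mk 0 x) - 1 = ue_mk 0 (Ex x)" using sums_unique2 by blast
  then show ?thesis by (simp add: algebra_simps)
qed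

lemma Ex_add:
  fixes x y :: "'a::{banach,real_normed_algebra}"
  assumes "x * y = y * x"
  shows "Ex (x + y) = Ex x + Ex y + Ex x * Ex y"
proof -
  have "ue_mk 0 x * ue_mk 0 y = ue_mk 0 y * ue_mk 0 x" using assms by (simp add: mk0_mult)
  then have "exp (ue_mk 0 x + ue_mk 0 y) = exp (ue_mk 0 x) * exp (ue_mk 0 y)" by (rule exp_add_commuting)
  then have "1 + ue_mk 0 (Ex (x + y)) = 1 + ue_mk 0 (Ex x + Ex y + Ex x * Ex y)"
    by (simp add: exp_mk0 one_plus_mk0_mult mk0_add[symmetric])
  then show ?thesis using mk0_inj by auto
qed

lemma Ex_zero: "Ex (0::'a::{banach,real_normed_algebra}) = 0"
proof -
  have "pw (0::'a) n = 0" for n by (induction n) auto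
  then show ?thesis by (simp add: Ex_def)
qed




locale dsa =
  fixes scA :: "complex \<Rightarrow> 'a::{banach,real_normed_algebra} \<Rightarrow> 'a" and stA :: "'a \<Rightarrow> 'a"
    and scB :: "complex \<Rightarrow> 'b::{banach,real_normed_algebra} \<Rightarrow> 'b" and stB :: "'b \<Rightarrow> 'b"
    and \<iota> :: "'a \<Rightarrow> 'b" and k :: nat and p q C :: real
  assumes A: "banach_star_algebra scA stA" and B: "C_star_algebra scB stB"
    and emb: "star_embedding scA stA scB stB \<iota>" and k2: "k \<ge> 2"
    and ppos: "p > 0" and qpos: "q > 0" and pqk: "p + q = real k" and Cpos: "C > 0"
    and diff: "\<And>a. norm (pw a (k-1)) \<le> C * norm a powr p * norm (\<iota> a) powr q"
begin

lemma ca: "cplx_alg scA" and inv: "involution scA stA" and stc: "continuous_on UNIV stA"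
  using A by (auto simp: banach_star_algebra_def)

lemma sc_real: "scA (complex_of_real r) x = r *\<^sub>R x" using ca unfolding cplx_alg_def by blast
lemma sc_mult: "scA (z * w) x = scA z (scA w x)" using ca unfolding cplx_alg_def by blast
lemma sc_add_left: "scA (z + w) x = scA z x + scA w x" using ca unfolding cplx_alg_def by blast
lemma sc_add_right: "scA z (x + y) = scA z x + scA z y" using ca unfolding cplx_alg_def by blast
lemma sc_ml: "scA z (x * y) = scA z x * y" using ca unfolding cplx_alg_def by blast
lemma sc_mr: "scA z (x * y) = x * scA z y" using ca unfolding cplx_alg_def by blast
lemma norm_sc: "norm (scA z x) = cmod z * norm x" using ca unfolding cplx_alg_def by blast

lemma st_st: "stA (stA x) = x" using inv by (simp add: involution_def)
lemma st_add: "stA (x + y) = stA x + stA y" using inv by (simp add: involution_def)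
lemma st_sc: "stA (scA z x) = scA (cnj z) (stA x)" using inv by (simp add: involution_def)
lemma st_mult: "stA (x * y) = stA y * stA x" using inv by (simp add: involution_def)

lemma sc_swap: "scA z (scA w x) = scA w (scA z x)"
  by (metis sc_mult mult.commute)

lemma sc_0_left: "scA 0 x = 0" using sc_real[of 0 x] by simp

lemma sc_comm: "scA z x * scA w x = scA w x * scA z x"
proof -
  have "scA z x * scA w x = scA (z * w) (x * x)" by (simp add: sc_ml[symmetric] sc_mr[symmetric] sc_mult sc_swap)
  moreover have "scA w x * scA z x = scA (w * z) (x * x)" by (simp add: sc_ml[symmetric] sc_mr[symmetric] sc_mult sc_swap)
  ultimately show ?thesis by (simp add: mult.commute)
qed

lemma sc_scaleR: "scA z (r *\<^sub>R x) = r *\<^sub>R scA z x"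
proof -
  show ?thesis using sc_swap[of z "complex_of_real r" x] by (simp add: sc_real)
qed

lemma sc_zero: "scA z 0 = 0"
  using sc_scaleR[of z 0 0] by simp

lemma bl_sc_left: "bounded_linear (\<lambda>z. scA z a)"
proof (rule bounded_linear_intro[where K="norm a"])
  show "scA (x + y) a = scA x a + scA y a" for x y by (rule sc_add_left)
  show "scA (r *\<^sub>R x) a = r *\<^sub>R scA x a" for r x
    by (simp add: scaleR_conv_of_real sc_mult sc_real)
  show "norm (scA x a) \<le> norm x * norm a" for x by (simp add: norm_sc)
qed

lemma bl_sc_right: "bounded_linear (scA z)"
proof (rule bounded_linear_intro[where K="cmod z"])
  show "scA z (x + y) = scA z x + scA z y" for x y by (rule sc_add_right)
  show "scA z (r *\<^sub>R x) = r *\<^sub>R scA z x" for r x by (rule sc_scaleR)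
  show "norm (scA z x) \<le> norm x * cmod z" for x by (simp add: norm_sc)
qed

lemma st_zero: "stA 0 = 0"
  using st_add[of 0 0] by simp
lemma st_scaleR: "stA (r *\<^sub>R x) = r *\<^sub>R stA x"
  using st_sc[of "complex_of_real r" x] by (simp add: sc_real)

lemma linear_st: "linear stA"
  by (rule linearI) (auto simp: st_add st_scaleR)

lemma st_sum: "stA (sum f S) = sum (\<lambda>n. stA (f n)) S"
  using linear_st by (rule linear_sum)

lemma st_suminf:
  assumes "summable f" shows "stA (suminf f) = (\<Sum>n. stA (f n))"
proof -
  have "(\<lambda>N. \<Sum>n<N. f n) \<longlonglongrightarrow> suminf f" using assms summable_LIMSEQ by blast
  then have "(\<lambda>N. stA (\<Sum>n<N. f n)) \<longlonglongrightarrow> stA (suminf f)"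
    using stc continuous_on_tendsto_compose[of UNIV stA "\<lambda>N. \<Sum>n<N. f n"] by auto
  then have "(\<lambda>n. stA (f n)) sums stA (suminf f)" by (simp add: sums_def st_sum)
  then show ?thesis by (simp add: sums_iff)
qed

lemma st_pw: "stA (pw x n) = pw (stA x) n"
  by (induction n) (auto simp: st_mult pw_comm)

lemma st_Ex: "stA (Ex x) = Ex (stA x)"
  unfolding Ex_def
  by (subst st_suminf[OF summable_norm_cancel[OF summable_Ex]]) (simp add: st_scaleR st_pw)

lemma sc_pw: "pw (scA z x) n = scA (z ^ Suc n) (pw x n)"
proof (induction n)
  case 0 then show ?case by simp
next
  case (Suc n)
  have "pw (scA z x) (Suc n) = scA (z ^ Suc n) (pw x n) * scA z x" using Suc by simp
  also have "\<dots> = scA (z ^ Suc n) (pw x n * scA z x)" by (simp add: sc_ml)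
  also have "\<dots> = scA (z ^ Suc n) (scA z (pw x n * x))" by (simp add: sc_mr)
  also have "\<dots> = scA (z ^ Suc n * z) (pw x (Suc n))" by (simp add: sc_mult)
  also have "\<dots> = scA (z ^ Suc (Suc n)) (pw x (Suc n))" by (simp add: mult.commute)
  finally show ?case .
qed

definition wt :: "'a \<Rightarrow> real \<Rightarrow> 'a" where "wt b t = Ex (scA (\<i> * complex_of_real t) b)"

lemma wt_add: "wt b (s + t) = wt b s + wt b t + wt b s * wt b t"
proof -
  have "scA (\<i> * complex_of_real (s + t)) b = scA (\<i> * complex_of_real s) b + scA (\<i> * complex_of_real t) b"
    by (simp add: distrib_left sc_add_left)
  then show ?thesis unfolding wt_def by (simp add: Ex_add sc_comm)
qed

lemma wt_zero: "wt b 0 = 0"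
  by (simp add: wt_def sc_0_left Ex_zero)

lemma st_wt: "stA b = b \<Longrightarrow> stA (wt b t) = wt b (-t)"
  by (simp add: wt_def st_Ex st_sc)

lemma wt_unitary: "wt b (-t) * wt b t = - (wt b (-t) + wt b t)"
proof -
  have "0 = wt b (-t + t)" by (simp add: wt_zero)
  also have "\<dots> = wt b (-t) + wt b t + wt b (-t) * wt b t" by (rule wt_add)
  finally show ?thesis by (simp add: algebra_simps eq_neg_iff_add_eq_0)
qed

end



lemma pow_diff_le: "(1 + x) ^ Suc n - x ^ Suc n \<le> real (Suc n) * (1 + x) ^ n" if "x \<ge> 0" for x :: real
proof (induction n)
  case 0 then show ?case by simp
next
  case (Suc n)
  have "(1 + x) ^ Suc (Suc n) - x ^ Suc (Suc n) = (1 + x) * ((1 + x) ^ Suc n - x ^ Suc n) + x ^ Suc n"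
    by (simp add: algebra_simps)
  also have "\<dots> \<le> (1 + x) * (real (Suc n) * (1 + x) ^ n) + (1 + x) ^ Suc n"
    using Suc that by (intro add_mono mult_left_mono power_mono) auto
  also have "\<dots> = real (Suc (Suc n)) * (1 + x) ^ Suc n" by (simp add: algebra_simps)
  finally show ?case .
qed

context dsa begin

lemma stB_st: "stB (stB y) = y" and stB_mult: "stB (x * y) = stB y * stB x"
  and cstar: "norm (stB y * y) = norm y ^ 2"
  using B by (auto simp: C_star_algebra_def banach_star_algebra_def involution_def)

lemma normB_st_le: "norm y \<le> norm (stB y)"
proof (cases "norm y = 0")
  case True then show ?thesis by simp
next
  case False
  have "norm y ^ 2 \<le> norm (stB y) * norm y" using cstar[of y] norm_mult_ineq[of "stB y" y] by simp
  then show ?thesis using False by (simp add: power2_eq_square)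
qed

lemma normB_st: "norm (stB y) = norm y"
  using normB_st_le[of y] normB_st_le[of "stB y"] stB_st[of y] by simp

lemma iota_add: "\<iota> (x + y) = \<iota> x + \<iota> y" and iota_mult: "\<iota> (x * y) = \<iota> x * \<iota> y"
  and iota_st: "\<iota> (stA x) = stB (\<iota> x)"
  using emb by (auto simp: star_embedding_def)

lemma iota_neg: "\<iota> (- x) = - \<iota> x"
proof -
  have "\<iota> 0 = 0" using iota_add[of 0 0] by simp
  then have "\<iota> x + \<iota> (- x) = 0" using iota_add[of x "-x"] by simp
  then show ?thesis by (simp add: add_eq_0_iff2 add.commute)
qed

lemma iota_wt_le2:
  assumes sa: "stA b = b" shows "norm (\<iota> (wt b t)) \<le> 2"
proof -
  let ?w = "wt b t" and ?w' = "wt b (-t)"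
  have "norm (\<iota> ?w) ^ 2 = norm (stB (\<iota> ?w) * \<iota> ?w)" by (simp add: cstar)
  also have "\<dots> = norm (\<iota> (?w' * ?w))" by (simp add: iota_mult iota_st[symmetric] st_wt[OF sa])
  also have "\<dots> = norm (\<iota> (- (?w' + ?w)))" by (simp only: wt_unitary)
  also have "\<dots> = norm (\<iota> ?w' + \<iota> ?w)" by (simp only: iota_neg iota_add norm_minus_cancel)
  also have "\<dots> \<le> norm (\<iota> ?w) + norm (\<iota> ?w)"
    using norm_triangle_ineq[of "\<iota> ?w'" "\<iota> ?w"] normB_st[of "\<iota> ?w"]
    by (simp add: iota_st[symmetric] st_wt[OF sa])
  finally have "norm (\<iota> ?w) ^ 2 \<le> 2 * norm (\<iota> ?w)" by simp
  then show ?thesis by (cases "norm (\<iota> ?w) = 0") (auto simp: power2_eq_square)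
qed

lemma wt_rec:
  "norm (wt b (real (Suc n) * t) - pw (wt b t) n) \<le> (1 + norm (wt b t)) ^ Suc n - 1 - norm (wt b t) ^ Suc n"
proof (induction n)
  case 0 then show ?case by simp
next
  case (Suc n)
  let ?w = "wt b t" and ?W = "wt b (real (Suc n) * t)" and ?P = "pw (wt b t) n" and ?x = "norm (wt b t)"
  have e: "wt b (real (Suc (Suc n)) * t) = ?W + ?w + ?W * ?w"
  proof -
    have "real (Suc (Suc n)) * t = real (Suc n) * t + t" by (simp add: algebra_simps)
    then show ?thesis using wt_add[of b "real (Suc n) * t" t] by (simp only: add.commute add.left_commute)
  qed
  have "wt b (real (Suc (Suc n)) * t) - pw ?w (Suc n) = (?W - ?P) + (?W - ?P) * ?w + ?w + ?P"
    unfolding e by (simp add: algebra_simps)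
  have "norm (wt b (real (Suc (Suc n)) * t) - pw ?w (Suc n)) \<le> norm (?W - ?P) + norm (?W - ?P) * ?x + ?x + ?x ^ Suc n"
  proof -
    have "norm ((?W - ?P) + (?W - ?P) * ?w + ?w + ?P) \<le> norm ((?W - ?P) + (?W - ?P) * ?w + ?w) + norm ?P"
      by (rule norm_triangle_ineq)
    also have "\<dots> \<le> norm ((?W - ?P) + (?W - ?P) * ?w) + norm ?w + norm ?P"
      using norm_triangle_ineq by simp
    also have "\<dots> \<le> norm (?W - ?P) + norm ((?W - ?P) * ?w) + norm ?w + norm ?P"
      using norm_triangle_ineq by simp
    also have "\<dots> \<le> norm (?W - ?P) + norm (?W - ?P) * ?x + ?x + ?x ^ Suc n"
      using norm_pw[of ?w n] norm_mult_ineq[of "?W - ?P" ?w] by linarith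
    finally show ?thesis using \<open>_ = (?W - ?P) + (?W - ?P) * ?w + ?w + ?P\<close> by simp
  qed
  also have "\<dots> = norm (?W - ?P) * (1 + ?x) + ?x + ?x ^ Suc n" by (simp add: algebra_simps)
  also have "\<dots> \<le> ((1 + ?x) ^ Suc n - 1 - ?x ^ Suc n) * (1 + ?x) + ?x + ?x ^ Suc n"
    using Suc by (intro add_mono mult_right_mono) auto
  also have "\<dots> = (1 + ?x) ^ Suc (Suc n) - 1 - ?x ^ Suc (Suc n)" by (simp add: algebra_simps)
  finally show ?case .
qed

definition rr :: real where "rr = max (real k - 1) p"
definition DD :: real where "DD = real k * 2 ^ (k - 1) + C * 2 powr q"

lemma DD_ge1: "DD \<ge> 1"
proof -
  have "1 * 1 \<le> real k * 2 ^ (k - 1)" using k2 by (intro mult_mono) auto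
  then have "real k * 2 ^ (k - 1) \<ge> 1" by simp
  moreover have "C * 2 powr q \<ge> 0" using Cpos by simp
  ultimately show ?thesis unfolding DD_def by linarith
qed

lemma step_bound:
  assumes sa: "stA b = b"
  shows "norm (wt b (real k * t)) \<le> DD * max 1 (norm (wt b t)) powr rr"
proof -
  let ?x = "norm (wt b t)" let ?m = "max 1 ?x"
  obtain n where kn: "k = Suc n" using k2 by (cases k) auto
  have m1: "?m \<ge> 1" by simp
  have nr: "real n \<le> rr" unfolding rr_def using kn by simp
  have pr: "p \<le> rr" unfolding rr_def by simp
  have "norm (wt b (real k * t)) \<le> norm (wt b (real k * t) - pw (wt b t) n) + norm (pw (wt b t) n)"
    using norm_triangle_sub[of "wt b (real k * t)" "pw (wt b t) n"] by (simp add: add.commute)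
  also have "\<dots> \<le> ((1 + ?x) ^ Suc n - 1 - ?x ^ Suc n) + C * ?x powr p * 2 powr q"
  proof (rule add_mono)
    show "norm (wt b (real k * t) - pw (wt b t) n) \<le> (1 + ?x) ^ Suc n - 1 - ?x ^ Suc n"
      using wt_rec[of b n t] kn by simp
    have "norm (pw (wt b t) n) \<le> C * ?x powr p * norm (\<iota> (wt b t)) powr q"
      using diff[of "wt b t"] kn by simp
    also have "\<dots> \<le> C * ?x powr p * 2 powr q"
      using iota_wt_le2[OF sa, of t] Cpos qpos by (intro mult_left_mono powr_mono2) auto
    finally show "norm (pw (wt b t) n) \<le> C * ?x powr p * 2 powr q" .
  qed
  also have "\<dots> \<le> real k * 2 ^ (k - 1) * ?m powr rr + C * ?m powr rr * 2 powr q"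
  proof (rule add_mono)
    have "(1 + ?x) ^ Suc n - 1 - ?x ^ Suc n \<le> real (Suc n) * (1 + ?x) ^ n"
      using pow_diff_le[of ?x n] by simp
    also have "\<dots> \<le> real (Suc n) * (2 * ?m) ^ n"
      by (intro mult_left_mono power_mono) auto
    also have "\<dots> = real (Suc n) * 2 ^ n * ?m powr real n"
      using m1 by (simp add: powr_realpow power_mult_distrib)
    also have "\<dots> \<le> real (Suc n) * 2 ^ n * ?m powr rr"
      using m1 nr by (intro mult_left_mono powr_mono) auto
    finally show "(1 + ?x) ^ Suc n - 1 - ?x ^ Suc n \<le> real k * 2 ^ (k - 1) * ?m powr rr" using kn by simp
    have "?x powr p \<le> ?m powr p" using ppos by (intro powr_mono2) auto
    also have "\<dots> \<le> ?m powr rr" using m1 pr by (intro powr_mono) auto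
    finally show "C * ?x powr p * 2 powr q \<le> C * ?m powr rr * 2 powr q"
      using Cpos by (intro mult_right_mono mult_left_mono) auto
  qed
  also have "\<dots> = DD * ?m powr rr" by (simp add: DD_def algebra_simps)
  finally show ?thesis .
qed

end



lemma powr_absorb:
  fixes a b c :: real
  assumes "0 < a" "a < b" "0 < c"
  shows "\<exists>K. \<forall>x\<ge>0. c * x powr a \<le> x powr b + K"
proof -
  define X0 where "X0 = c powr (1 / (b - a))"
  have X0pos: "X0 > 0" using assms by (simp add: X0_def)
  have X0c: "X0 powr (b - a) = c" using assms by (simp add: X0_def powr_powr)
  show ?thesis
  proof (intro exI allI impI)
    fix x :: real assume x: "x \<ge> 0"
    show "c * x powr a \<le> x powr b + c * X0 powr a"
    proof (cases "x \<ge> X0")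
      case True
      then have xp: "x > 0" using X0pos by linarith
      have "c \<le> x powr (b - a)" using X0c True X0pos assms by (metis powr_mono2 less_eq_real_def diff_gt_0_iff_gt)
      then have "c * x powr a \<le> x powr (b - a) * x powr a" by (intro mult_right_mono) auto
      also have "\<dots> = x powr b" using xp by (simp add: powr_add[symmetric])
      finally show ?thesis using assms X0pos by (smt (verit) mult_pos_pos powr_gt_zero)
    next
      case False
      then have "x powr a \<le> X0 powr a" using x assms by (intro powr_mono2) auto
      then have "c * x powr a \<le> c * X0 powr a" using assms by simp
      then show ?thesis by (smt (verit) powr_ge_zero)
    qed
  qed
qed

context dsa begin

lemma rr_ge1: "rr \<ge> 1" using k2 unfolding rr_def by simp

lemma ln_step:
  assumes sa: "stA b = b"
  shows "ln (max 1 (norm (wt b (real k * t)))) \<le> ln DD + rr * ln (max 1 (norm (wt b t)))"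
proof -
  let ?m = "max 1 (norm (wt b t))"
  have m1: "?m \<ge> 1" by simp
  have "1 \<le> DD * ?m powr rr" using DD_ge1 m1 rr_ge1
  proof -
    have "1 \<le> ?m powr rr" using m1 rr_ge1 by (intro ge_one_powr_ge_zero) auto
    then have "1 * 1 \<le> DD * ?m powr rr" using DD_ge1 by (intro mult_mono) auto
    then show ?thesis by simp
  qed
  then have "max 1 (norm (wt b (real k * t))) \<le> DD * ?m powr rr" using step_bound[OF sa, of t] by simp
  then have "ln (max 1 (norm (wt b (real k * t)))) \<le> ln (DD * ?m powr rr)" by (intro ln_mono) auto
  also have "\<dots> = ln DD + rr * ln ?m" using DD_ge1 m1 by (simp add: ln_mult ln_powr)
  finally show ?thesis .
qed

lemma growth:
  assumes tau: "log (real k) rr < \<tau>" and M: "M \<ge> 0"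
  shows "\<exists>K>0. \<forall>b t. stA b = b \<longrightarrow> norm b \<le> M \<longrightarrow> norm (wt b t) \<le> K * exp (\<bar>t\<bar> powr \<tau>)"
proof -
  have k1: "real k > 1" using k2 by simp
  define \<tau>2 where "\<tau>2 = (log (real k) rr + \<tau>) / 2"
  have l0: "log (real k) rr \<ge> 0" using rr_ge1 k1 by simp
  have t2a: "log (real k) rr < \<tau>2" and t2b: "\<tau>2 < \<tau>" and t2pos: "\<tau>2 > 0" using tau l0 by (auto simp: \<tau>2_def)
  define \<rho> where "\<rho> = real k powr \<tau>2"
  have rr\<rho>: "rr < \<rho>"
  proof -
    have "rr = real k powr (log (real k) rr)" using rr_ge1 k1 by simp
    also have "\<dots> < real k powr \<tau>2" using t2a k1 by (intro powr_less_mono) auto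
    finally show ?thesis by (simp add: \<rho>_def)
  qed
  have \<rho>1: "\<rho> > 1" using rr\<rho> rr_ge1 by simp
  define Ld where "Ld = ln DD"
  have Ld0: "Ld \<ge> 0" using DD_ge1 by (simp add: Ld_def)
  define E0 where "E0 = max M (Ld / (\<rho> - rr))"
  have E0M: "E0 \<ge> M" and E0pos: "E0 \<ge> 0" using M by (auto simp: E0_def)
  have E0L: "Ld \<le> E0 * (\<rho> - rr)"
  proof -
    have "Ld = Ld / (\<rho> - rr) * (\<rho> - rr)" using rr\<rho> by simp
    also have "\<dots> \<le> E0 * (\<rho> - rr)" using rr\<rho> by (intro mult_right_mono) (auto simp: E0_def)
    finally show ?thesis .
  qed
  define L where "L b t = ln (max 1 (norm (wt b t)))" for b t
  have base: "L b t \<le> M" if "stA b = b" "norm b \<le> M" "\<bar>t\<bar> \<le> 1" for b t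
  proof -
    have "norm (scA (\<i> * complex_of_real t) b) = \<bar>t\<bar> * norm b" by (simp add: norm_sc norm_mult)
    also have "\<dots> \<le> M" using that M by (metis abs_ge_zero mult_le_one mult_left_le_one_le norm_ge_zero order_trans mult_mono mult_1)
    finally have "norm (wt b t) \<le> exp M - 1" unfolding wt_def
      using norm_Ex_le by (smt (verit) exp_le_cancel_iff)
    then have "max 1 (norm (wt b t)) \<le> exp M" using M by (smt (verit) one_le_exp_iff)
    then show ?thesis unfolding L_def by (smt (verit) ln_exp ln_le_cancel_iff)
  qed
  have ind: "\<forall>t. \<bar>t\<bar> \<le> real k ^ m \<longrightarrow> L b t \<le> E0 * \<rho> ^ m" if "stA b = b" "norm b \<le> M" for b m
  proof (induction m)
    case 0 then show ?case using base[OF that] E0M by force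
  next
    case (Suc m)
    show ?case
    proof (intro allI impI)
      fix t assume t: "\<bar>t\<bar> \<le> real k ^ Suc m"
      have "\<bar>t / real k\<bar> \<le> real k ^ m" using t k1 by (simp add: field_simps)
      then have IH: "L b (t / real k) \<le> E0 * \<rho> ^ m" using Suc by blast
      have "L b t = L b (real k * (t / real k))" using k1 by simp
      also have "\<dots> \<le> Ld + rr * L b (t / real k)" unfolding L_def Ld_def by (rule ln_step[OF that(1)])
      also have "\<dots> \<le> E0 * (\<rho> - rr) * \<rho> ^ m + rr * (E0 * \<rho> ^ m)"
      proof (rule add_mono)
        have "1 \<le> \<rho> ^ m" using \<rho>1 by simp
        then have "E0 * (\<rho> - rr) * 1 \<le> E0 * (\<rho> - rr) * \<rho> ^ m"
          using E0pos rr\<rho> by (intro mult_left_mono) auto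
        then show "Ld \<le> E0 * (\<rho> - rr) * \<rho> ^ m" using E0L by simp
        show "rr * L b (t / real k) \<le> rr * (E0 * \<rho> ^ m)" using IH rr_ge1 by simp
      qed
      also have "\<dots> = E0 * \<rho> ^ Suc m" by (simp add: algebra_simps)
      finally show "L b t \<le> E0 * \<rho> ^ Suc m" .
    qed
  qed
  define c where "c = E0 * real k powr \<tau>2 + 1"
  have cpos: "c > 0" using E0pos unfolding c_def by (smt (verit) mult_nonneg_nonneg powr_ge_zero)
  have gen: "L b t \<le> M + c * \<bar>t\<bar> powr \<tau>2" if sa: "stA b = b" "norm b \<le> M" for b t
  proof (cases "\<bar>t\<bar> \<le> 1")
    case True then show ?thesis using base[OF sa True] cpos by (smt (verit) mult_nonneg_nonneg powr_ge_zero)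
  next
    case False
    define m where "m = nat \<lceil>log (real k) \<bar>t\<bar>\<rceil>"
    have lpos: "log (real k) \<bar>t\<bar> > 0" using False k1 by simp
    have km: "real k ^ m = real k powr real m" using k1 by (simp add: powr_realpow)
    have mge: "real m \<ge> log (real k) \<bar>t\<bar>" using lpos unfolding m_def by linarith
    have mle: "real m < log (real k) \<bar>t\<bar> + 1" using lpos unfolding m_def by linarith
    have "\<bar>t\<bar> = real k powr (log (real k) \<bar>t\<bar>)" using False k1 by simp
    also have "\<dots> \<le> real k powr real m" using mge k1 by (intro powr_mono) auto
    finally have t1: "\<bar>t\<bar> \<le> real k ^ m" using km by simp
    have "real k powr real m \<le> real k powr (log (real k) \<bar>t\<bar> + 1)" using mle k1 by (intro powr_mono) auto
    also have "\<dots> = real k * \<bar>t\<bar>" using False k1 by (simp add: powr_add)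
    finally have t2: "real k powr real m \<le> real k * \<bar>t\<bar>" .
    have "\<rho> ^ m = (real k powr real m) powr \<tau>2" unfolding \<rho>_def using k1
      by (simp add: powr_powr powr_realpow[symmetric] mult.commute)
    also have "\<dots> \<le> (real k * \<bar>t\<bar>) powr \<tau>2" using t2 t2pos k1 by (intro powr_mono2) auto
    also have "\<dots> = real k powr \<tau>2 * \<bar>t\<bar> powr \<tau>2" using k1 by (simp add: powr_mult)
    finally have "\<rho> ^ m \<le> real k powr \<tau>2 * \<bar>t\<bar> powr \<tau>2" .
    then have "L b t \<le> E0 * (real k powr \<tau>2 * \<bar>t\<bar> powr \<tau>2)"
      using ind[OF sa, of m] t1 E0pos by (smt (verit) mult_left_mono)
    also have "\<dots> \<le> c * \<bar>t\<bar> powr \<tau>2" unfolding c_def by (simp add: algebra_simps)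
    finally show ?thesis using M by simp
  qed
  obtain K1 where K1: "\<And>x. x \<ge> 0 \<Longrightarrow> c * x powr \<tau>2 \<le> x powr \<tau> + K1"
    using powr_absorb[OF t2pos t2b cpos] by blast
  show ?thesis
  proof (intro exI conjI allI impI)
    show "exp (M + K1) > 0" by simp
    fix b t assume sa: "stA b = b" "norm b \<le> M"
    have "L b t \<le> M + K1 + \<bar>t\<bar> powr \<tau>" using gen[OF sa, of t] K1[of "\<bar>t\<bar>"] by simp
    then have "max 1 (norm (wt b t)) \<le> exp (M + K1 + \<bar>t\<bar> powr \<tau>)" unfolding L_def
      by (smt (verit) exp_ln exp_le_cancel_iff)
    then show "norm (wt b t) \<le> exp (M + K1) * exp (\<bar>t\<bar> powr \<tau>)" by (simp add: exp_add)
  qed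
qed

end



lemma integrable_weighted_limit:
  fixes f :: "'n::euclidean_space \<Rightarrow> 'b::banach"
  assumes h: "h integrable_on cbox a b"
    and approx: "\<And>e. e > 0 \<Longrightarrow> \<exists>\<phi>. (\<forall>x\<in>cbox a b. norm (f x - \<phi> x) \<le> e * h x) \<and> \<phi> integrable_on cbox a b"
  shows "f integrable_on cbox a b"
proof -
  have "\<exists>\<phi>. (\<forall>x\<in>cbox a b. norm (f x - \<phi> x) \<le> (1 / (real n + 1)) * h x) \<and> \<phi> integrable_on cbox a b" for n
    using approx[of "1 / (real n + 1)"] by auto
  then obtain \<phi> where \<phi>f: "\<And>n x. x \<in> cbox a b \<Longrightarrow> norm (f x - \<phi> n x) \<le> (1 / (real n + 1)) * h x"
    and \<phi>i: "\<And>n. \<phi> n integrable_on cbox a b" by metis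
  have h0: "h x \<ge> 0" if "x \<in> cbox a b" for x
    using \<phi>f[OF that, of 0] norm_ge_zero[of "f x - \<phi> 0 x"] by (simp del: norm_ge_zero)
  define H where "H = integral (cbox a b) h"
  have H0: "H \<ge> 0" unfolding H_def using h h0 by (simp add: integral_nonneg)
  define I where "I n = integral (cbox a b) (\<phi> n)" for n
  have Idiff: "norm (I m - I n) \<le> (1 / (real m + 1) + 1 / (real n + 1)) * H" for m n
  proof -
    have "norm (I m - I n) = norm (integral (cbox a b) (\<lambda>x. \<phi> m x - \<phi> n x))"
      unfolding I_def using \<phi>i by (simp add: integral_diff)
    also have "\<dots> \<le> integral (cbox a b) (\<lambda>x. (1 / (real m + 1) + 1 / (real n + 1)) * h x)"
    proof (rule integral_norm_bound_integral)
      show "(\<lambda>x. \<phi> m x - \<phi> n x) integrable_on cbox a b" using \<phi>i by (simp add: integrable_diff)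
      show "(\<lambda>x. (1 / (real m + 1) + 1 / (real n + 1)) * h x) integrable_on cbox a b"
        using integrable_cmul[OF h, of "1 / (real m + 1) + 1 / (real n + 1)"] by simp
      fix x assume x: "x \<in> cbox a b"
      have "norm (\<phi> m x - \<phi> n x) \<le> norm (f x - \<phi> m x) + norm (f x - \<phi> n x)"
        using norm_triangle_ineq4[of "f x - \<phi> n x" "f x - \<phi> m x"] by (simp add: add.commute)
      also have "\<dots> \<le> (1 / (real m + 1)) * h x + (1 / (real n + 1)) * h x" using \<phi>f[OF x] by (intro add_mono) auto
      finally show "norm (\<phi> m x - \<phi> n x) \<le> (1 / (real m + 1) + 1 / (real n + 1)) * h x" by (simp add: algebra_simps)
    qed
    also have "\<dots> = (1 / (real m + 1) + 1 / (real n + 1)) * H" unfolding H_def using h by simp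
    finally show ?thesis .
  qed
  have smallN: "\<exists>N. \<forall>n\<ge>N. (1 / (real n + 1)) * (H + 1) < e" if "e > 0" for e
  proof -
    obtain N :: nat where N: "(H + 1) / e < real N" using reals_Archimedean2 by blast
    show ?thesis
    proof (intro exI allI impI)
      fix n assume "N \<le> n"
      then have "(H + 1) / e < real n + 1" using N by linarith
      then have "H + 1 < e * (real n + 1)" using that by (simp add: field_simps)
      then show "(1 / (real n + 1)) * (H + 1) < e" by (simp add: field_simps)
    qed
  qed
  have "Cauchy I" unfolding Cauchy_iff
  proof (intro allI impI)
    fix e :: real assume e: "e > 0"
    obtain N where N: "\<And>n. n \<ge> N \<Longrightarrow> (1 / (real n + 1)) * (H + 1) < e / 2" using smallN[of "e/2"] e by auto
    show "\<exists>M. \<forall>m\<ge>M. \<forall>n\<ge>M. norm (I m - I n) < e"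
    proof (intro exI allI impI)
      fix m n assume m: "N \<le> m" and n: "N \<le> n"
      have "norm (I m - I n) \<le> (1 / (real m + 1)) * H + (1 / (real n + 1)) * H" using Idiff[of m n] by (simp add: algebra_simps)
      also have "\<dots> \<le> (1 / (real m + 1)) * (H + 1) + (1 / (real n + 1)) * (H + 1)"
        by (intro add_mono mult_left_mono) auto
      also have "\<dots> < e / 2 + e / 2" using N[OF m] N[OF n] by linarith
      finally show "norm (I m - I n) < e" by simp
    qed
  qed
  then obtain s where s: "I \<longlonglongrightarrow> s" using convergent_eq_Cauchy by blast
  have "(f has_integral s) (cbox a b)" unfolding has_integral
  proof (intro allI impI)
    fix e :: real assume e: "e > 0"
    obtain N1 where N1: "\<And>n. n \<ge> N1 \<Longrightarrow> norm (I n - s) < e / 3" using s e unfolding LIMSEQ_iff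
      by (meson divide_pos_pos zero_less_numeral)
    obtain N2 where N2: "\<And>n. n \<ge> N2 \<Longrightarrow> (1 / (real n + 1)) * (H + 1) < e / 3" using smallN[of "e/3"] e by auto
    define N where "N = max N1 N2"
    have "(\<phi> N has_integral I N) (cbox a b)" unfolding I_def using \<phi>i by auto
    then obtain \<gamma>1 where g1: "gauge \<gamma>1" and g1f: "\<And>\<D>. \<D> tagged_division_of cbox a b \<and> \<gamma>1 fine \<D> \<Longrightarrow>
        norm ((\<Sum>(x, K)\<in>\<D>. measure lborel K *\<^sub>R \<phi> N x) - I N) < e / 3"
      unfolding has_integral using e by (meson divide_pos_pos zero_less_numeral)
    have "(h has_integral H) (cbox a b)" unfolding H_def using h by auto
    then obtain \<gamma>2 where g2: "gauge \<gamma>2" and g2f: "\<And>\<D>. \<D> tagged_division_of cbox a b \<and> \<gamma>2 fine \<D> \<Longrightarrow>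
        norm ((\<Sum>(x, K)\<in>\<D>. measure lborel K *\<^sub>R h x) - H) < 1"
      unfolding has_integral by (meson zero_less_one)
    show "\<exists>\<gamma>. gauge \<gamma> \<and> (\<forall>\<D>. \<D> tagged_division_of cbox a b \<and> \<gamma> fine \<D> \<longrightarrow>
            norm ((\<Sum>(x, K)\<in>\<D>. measure lborel K *\<^sub>R f x) - s) < e)"
    proof (intro exI conjI allI impI)
      show "gauge (\<lambda>x. \<gamma>1 x \<inter> \<gamma>2 x)" using g1 g2 by (rule gauge_Int)
      fix \<D> assume D: "\<D> tagged_division_of cbox a b \<and> (\<lambda>x. \<gamma>1 x \<inter> \<gamma>2 x) fine \<D>"
      then have Dt: "\<D> tagged_division_of cbox a b" and f1: "\<gamma>1 fine \<D>" and f2: "\<gamma>2 fine \<D>"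
        using fine_Int by auto
      have A: "norm ((\<Sum>(x, K)\<in>\<D>. measure lborel K *\<^sub>R \<phi> N x) - I N) < e / 3" using g1f Dt f1 by blast
      have Bh: "(\<Sum>(x, K)\<in>\<D>. measure lborel K *\<^sub>R h x) < H + 1" using g2f[of \<D>] Dt f2 by auto
      have fin: "finite \<D>" using Dt by blast
      have tag: "x \<in> cbox a b" if "(x, K) \<in> \<D>" for x K using tag_in_interval[OF Dt that] .
      have c0: "measure lborel K \<ge> 0" if "(x, K) \<in> \<D>" for x K by (rule measure_nonneg)
      have "norm ((\<Sum>(x, K)\<in>\<D>. measure lborel K *\<^sub>R f x) - (\<Sum>(x, K)\<in>\<D>. measure lborel K *\<^sub>R \<phi> N x))
          = norm (\<Sum>(x, K)\<in>\<D>. measure lborel K *\<^sub>R (f x - \<phi> N x))"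
        by (simp add: sum_subtractf[symmetric] case_prod_unfold scaleR_diff_right)
      also have "\<dots> \<le> (\<Sum>(x, K)\<in>\<D>. norm (measure lborel K *\<^sub>R (f x - \<phi> N x)))"
        by (rule norm_sum[THEN order_trans]) (simp add: case_prod_unfold)
      also have "\<dots> \<le> (\<Sum>(x, K)\<in>\<D>. (1 / (real N + 1)) * (measure lborel K * h x))"
      proof (rule sum_mono)
        fix xK assume xK: "xK \<in> \<D>"
        obtain x K where xKe: "xK = (x, K)" by fastforce
        have "norm (measure lborel K *\<^sub>R (f x - \<phi> N x)) = measure lborel K * norm (f x - \<phi> N x)"
          using c0[of x K] xK xKe by simp
        also have "\<dots> \<le> measure lborel K * ((1 / (real N + 1)) * h x)"
          using c0[of x K] xK xKe \<phi>f[OF tag[of x K]] by (intro mult_left_mono) auto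
        finally show "(case xK of (x, K) \<Rightarrow> norm (measure lborel K *\<^sub>R (f x - \<phi> N x))) \<le>
              (case xK of (x, K) \<Rightarrow> (1 / (real N + 1)) * (measure lborel K * h x))" using xKe by (simp add: algebra_simps)
      qed
      also have "\<dots> = (1 / (real N + 1)) * (\<Sum>(x, K)\<in>\<D>. measure lborel K *\<^sub>R h x)"
        by (simp add: sum_distrib_left case_prod_unfold)
      also have "\<dots> \<le> (1 / (real N + 1)) * (H + 1)" using Bh by (intro mult_left_mono) auto
      also have "\<dots> < e / 3" using N2[of N] by (simp add: N_def)
      finally have C: "norm ((\<Sum>(x, K)\<in>\<D>. measure lborel K *\<^sub>R f x) - (\<Sum>(x, K)\<in>\<D>. measure lborel K *\<^sub>R \<phi> N x)) < e / 3" .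
      have D3: "norm (I N - s) < e / 3" using N1[of N] by (simp add: N_def)
      have "norm ((\<Sum>(x, K)\<in>\<D>. measure lborel K *\<^sub>R f x) - s) \<le>
          norm ((\<Sum>(x, K)\<in>\<D>. measure lborel K *\<^sub>R f x) - (\<Sum>(x, K)\<in>\<D>. measure lborel K *\<^sub>R \<phi> N x))
          + norm ((\<Sum>(x, K)\<in>\<D>. measure lborel K *\<^sub>R \<phi> N x) - I N) + norm (I N - s)"
        by (rule norm_diff_triangle_le[OF norm_diff_triangle_le]) auto
      then show "norm ((\<Sum>(x, K)\<in>\<D>. measure lborel K *\<^sub>R f x) - s) < e" using A C D3 by linarith
    qed
  qed
  then show ?thesis by blast
qed




lemma abs_int_cbox:
  fixes g :: "real \<Rightarrow> complex"
  assumes "integrable lborel g"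
  shows "g absolutely_integrable_on cbox u v"
proof -
  have "g absolutely_integrable_on UNIV" using assms
    by (simp add: set_integrable_def integrable_completion borel_measurable_integrable)
  then show ?thesis by (rule absolutely_integrable_on_subcbox) auto
qed

lemma prod_cont_int:
  fixes g c :: "real \<Rightarrow> complex"
  assumes g: "integrable lborel g" and c: "continuous_on UNIV c"
  shows "(\<lambda>t. g t * c t) integrable_on cbox u v"
proof -
  have "(\<lambda>t. c t * g t) absolutely_integrable_on cbox u v"
  proof (rule absolutely_integrable_bounded_measurable_product[OF bilinear_times])
    show "c \<in> borel_measurable (lebesgue_on (cbox u v))"
      using c by (intro continuous_imp_measurable_on_sets_lebesgue) (auto intro: continuous_on_subset)
    show "cbox u v \<in> sets lebesgue" by simp
    show "bounded (c ` cbox u v)"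
      using c by (intro compact_imp_bounded compact_continuous_image) (auto intro: continuous_on_subset)
    show "g absolutely_integrable_on cbox u v" using g by (rule abs_int_cbox)
  qed
  then show ?thesis by (simp add: absolutely_integrable_on_def mult.commute)
qed

context dsa begin

lemma sc_sum: "scA z (sum f S) = sum (\<lambda>i. scA z (f i)) S"
  using linear_sum[OF bounded_linear.linear[OF bl_sc_right[of z]]] by (simp add: o_def)

lemma sc_diff: "scA z (x - y) = scA z x - scA z y"
  using linear_diff[OF bounded_linear.linear[OF bl_sc_right[of z]]] by simp

lemma cbox_int:
  fixes g :: "real \<Rightarrow> complex"
  assumes g: "integrable lborel g"
  shows "(\<lambda>t. scA (g t) (wt b t)) integrable_on cbox u v"
proof (rule integrable_weighted_limit)
  show "(\<lambda>t. norm (g t)) integrable_on cbox u v"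
    using abs_int_cbox[OF g, of u v] by (simp add: absolutely_integrable_on_def)
  fix e :: real assume e: "e > 0"
  define T where "T = max \<bar>u\<bar> \<bar>v\<bar>"
  have Tb: "\<bar>t\<bar> \<le> T" if "t \<in> cbox u v" for t using that by (auto simp: T_def)
  define trm where "trm i t = (1 / fact (Suc i)) *\<^sub>R pw (scA (\<i> * complex_of_real t) b) i" for i t
  define Mi where "Mi i = (T * norm b) ^ Suc i / fact (Suc i)" for i
  have Mb: "norm (trm i t) \<le> Mi i" if "t \<in> cbox u v" for i t
  proof -
    have "norm (trm i t) = norm (pw (scA (\<i> * complex_of_real t) b) i) / fact (Suc i)"
      by (simp add: trm_def divide_inverse mult.commute)
    also have "\<dots> \<le> norm (scA (\<i> * complex_of_real t) b) ^ Suc i / fact (Suc i)"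
      by (intro divide_right_mono norm_pw) auto
    also have "\<dots> \<le> Mi i" unfolding Mi_def using Tb[OF that]
      by (intro divide_right_mono power_mono) (auto simp: norm_sc norm_mult intro: mult_right_mono)
    finally show ?thesis .
  qed
  have sM: "summable Mi" unfolding Mi_def by (rule sums_summable[OF exp_m1_sums])
  have ul: "uniform_limit (cbox u v) (\<lambda>n t. \<Sum>i<n. trm i t) (\<lambda>t. \<Sum>i. trm i t) sequentially"
    by (rule Weierstrass_m_test[OF Mb sM])
  obtain N where N: "\<And>t. t \<in> cbox u v \<Longrightarrow> dist (\<Sum>i<N. trm i t) (\<Sum>i. trm i t) < e"
  proof -
    obtain N where "\<forall>n\<ge>N. \<forall>x\<in>cbox u v. dist (\<Sum>i<n. trm i x) (\<Sum>i. trm i x) < e"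
      using uniform_limitD[OF ul e] unfolding eventually_sequentially by blast
    then show ?thesis using that by blast
  qed
  have wts: "wt b t = (\<Sum>i. trm i t)" for t by (simp add: wt_def Ex_def trm_def)
  show "\<exists>\<phi>. (\<forall>x\<in>cbox u v. norm (scA (g x) (wt b x) - \<phi> x) \<le> e * norm (g x)) \<and> \<phi> integrable_on cbox u v"
  proof (intro exI conjI ballI)
    fix t assume t: "t \<in> cbox u v"
    have "norm (scA (g t) (wt b t) - scA (g t) (\<Sum>i<N. trm i t)) = norm (g t) * norm (wt b t - (\<Sum>i<N. trm i t))"
      by (simp add: sc_diff[symmetric] norm_sc)
    also have "\<dots> \<le> norm (g t) * e" using N[OF t] unfolding wts
      by (intro mult_left_mono) (auto simp: dist_norm norm_minus_commute less_imp_le)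
    finally show "norm (scA (g t) (wt b t) - scA (g t) (\<Sum>i<N. trm i t)) \<le> e * norm (g t)" by (simp add: mult.commute)
  next
    have eq: "scA (g t) (\<Sum>i<N. trm i t) = (\<Sum>i<N. scA (g t * (complex_of_real (1 / fact (Suc i)) * (\<i> * complex_of_real t) ^ Suc i)) (pw b i))" for t
      unfolding sc_sum trm_def
      by (intro sum.cong refl) (simp only: sc_pw sc_real[symmetric] sc_mult power_mult_distrib)
    have "(\<lambda>t. \<Sum>i<N. scA (g t * (complex_of_real (1 / fact (Suc i)) * (\<i> * complex_of_real t) ^ Suc i)) (pw b i)) integrable_on cbox u v"
    proof (intro integrable_sum)
      fix i assume "i \<in> {..<N}"
      have "(\<lambda>t. g t * (complex_of_real (1 / fact (Suc i)) * (\<i> * complex_of_real t) ^ Suc i)) integrable_on cbox u v"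
        by (intro prod_cont_int[OF g] continuous_intros)
      from integrable_linear[OF this bl_sc_left[of "pw b i"]]
      show "(\<lambda>t. scA (g t * (complex_of_real (1 / fact (Suc i)) * (\<i> * complex_of_real t) ^ Suc i)) (pw b i)) integrable_on cbox u v"
        by (simp add: o_def)
    qed auto
    then show "(\<lambda>t. scA (g t) (\<Sum>i<N. trm i t)) integrable_on cbox u v" by (simp only: eq)
  qed
qed

lemma univ_int:
  fixes g :: "real \<Rightarrow> complex"
  assumes g: "integrable lborel g" and K: "\<And>t. norm (wt b t) \<le> K * exp (\<bar>t\<bar> powr \<tau>)"
    and ge: "integrable lborel (\<lambda>t. cmod (g t) * exp (\<bar>t\<bar> powr \<tau>))"
  shows "(\<lambda>t. scA (g t) (wt b t)) integrable_on UNIV"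
proof (rule integrable_on_all_intervals_UNIV)
  show "(\<lambda>t. scA (g t) (wt b t)) integrable_on cbox u v" for u v using cbox_int[OF g] .
  show "norm (scA (g t) (wt b t)) \<le> K * (cmod (g t) * exp (\<bar>t\<bar> powr \<tau>))" for t
  proof -
    have "cmod (g t) * norm (wt b t) \<le> cmod (g t) * (K * exp (\<bar>t\<bar> powr \<tau>))"
      using K[of t] by (intro mult_left_mono) auto
    then show ?thesis by (simp add: norm_sc algebra_simps)
  qed
  show "(\<lambda>t. K * (cmod (g t) * exp (\<bar>t\<bar> powr \<tau>))) integrable_on UNIV"
    using integrable_cmul[OF integrable_on_lborel[OF ge], of K] by simp
qed

end



context dsa begin

lemma pw_approx: "norm (pw (b::'a) n * a - a) \<le> real (Suc n) * max 1 (norm b) ^ n * norm (b * a - a)"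
proof (induction n)
  case 0 then show ?case by simp
next
  case (Suc n)
  let ?M = "max 1 (norm b)" and ?d = "norm (b * a - a)"
  have "pw b (Suc n) * a - a = pw b n * (b * a - a) + (pw b n * a - a)"
  proof -
    have "pw b (Suc n) * a = pw b n * (b * a)" by (simp add: mult.assoc)
    then show ?thesis by (simp add: right_diff_distrib)
  qed
  then have "norm (pw b (Suc n) * a - a) \<le> norm (pw b n) * ?d + norm (pw b n * a - a)"
    by (metis norm_mult_ineq norm_triangle_le add_mono order_refl)
  also have "\<dots> \<le> ?M ^ Suc n * ?d + real (Suc n) * ?M ^ n * ?d"
  proof (rule add_mono[OF mult_right_mono Suc])
    have "norm (pw b n) \<le> norm b ^ Suc n" by (rule norm_pw)
    also have "\<dots> \<le> ?M ^ Suc n" by (intro power_mono) auto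
    finally show "norm (pw b n) \<le> ?M ^ Suc n" .
  qed auto
  also have "\<dots> \<le> ?M ^ Suc n * ?d + real (Suc n) * ?M ^ Suc n * ?d"
  proof -
    have "?M ^ n \<le> ?M ^ Suc n" by (intro power_increasing) auto
    then show ?thesis by (intro add_mono mult_right_mono mult_left_mono) auto
  qed
  also have "\<dots> = real (Suc (Suc n)) * ?M ^ Suc n * ?d" by (simp add: algebra_simps)
  finally show ?case .
qed

lemma exp_m1_sums_c: "(\<lambda>n. complex_of_real (1 / fact (Suc n)) * z ^ Suc n) sums (exp z - 1)"
proof -
  have "(\<lambda>n. z ^ n /\<^sub>R fact n) sums exp z" by (rule exp_converges)
  then have "(\<lambda>n. z ^ Suc n /\<^sub>R fact (Suc n)) sums (exp z - z ^ 0 /\<^sub>R fact 0)"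
    using sums_Suc_iff[of "\<lambda>n. z ^ n /\<^sub>R fact n"] by simp
  then show ?thesis by (simp add: scaleR_conv_of_real divide_inverse mult.commute del: fact_Suc)
qed

lemma pointwise_bound:
  "norm (wt b t * a - scA (exp (\<i> * complex_of_real t) - 1) a)
     \<le> \<bar>t\<bar> * exp (\<bar>t\<bar> * max 1 (norm b)) * norm (b * a - a)"
proof -
  let ?z = "\<i> * complex_of_real t" and ?M = "max 1 (norm b)" and ?d = "norm (b * a - a)"
  define c where "c n = complex_of_real (1 / fact (Suc n)) * ?z ^ Suc n" for n
  have s1: "(\<lambda>n. ((1 / fact (Suc n)) *\<^sub>R pw (scA ?z b) n) * a) sums (wt b t * a)"
    unfolding wt_def Ex_def
    by (rule bounded_linear.sums[OF bounded_linear_mult_left summable_sums[OF summable_norm_cancel[OF summable_Ex]]])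
  have t1: "((1 / fact (Suc n)) *\<^sub>R pw (scA ?z b) n) * a = scA (c n) (pw b n * a)" for n
    unfolding c_def by (simp only: sc_pw mult_scaleR_left sc_ml[symmetric] sc_real[symmetric] sc_mult[symmetric])
  have s2: "(\<lambda>n. scA (c n) a) sums scA (exp ?z - 1) a"
    unfolding c_def by (rule bounded_linear.sums[OF bl_sc_left exp_m1_sums_c])
  have s3: "(\<lambda>n. scA (c n) (pw b n * a - a)) sums (wt b t * a - scA (exp ?z - 1) a)"
    using sums_diff[OF s1 s2] unfolding t1 sc_diff[symmetric] .
  define B where "B n = \<bar>t\<bar> * ?d * ((\<bar>t\<bar> * ?M) ^ n / fact n)" for n
  have sB: "B sums (\<bar>t\<bar> * ?d * exp (\<bar>t\<bar> * ?M))"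
    unfolding B_def
    using sums_mult[OF exp_converges[of "\<bar>t\<bar> * ?M"], of "\<bar>t\<bar> * ?d"]
    by (simp add: divide_inverse mult.commute)
  have nb: "norm (scA (c n) (pw b n * a - a)) \<le> B n" for n
  proof -
    have cm: "cmod (c n) = \<bar>t\<bar> ^ Suc n / fact (Suc n)"
      unfolding c_def norm_mult norm_of_real norm_power by (simp del: fact_Suc)
    have "norm (scA (c n) (pw b n * a - a)) = \<bar>t\<bar> ^ Suc n / fact (Suc n) * norm (pw b n * a - a)"
      by (simp add: norm_sc cm)
    also have "\<dots> \<le> \<bar>t\<bar> ^ Suc n / fact (Suc n) * (real (Suc n) * ?M ^ n * ?d)"
      by (intro mult_left_mono pw_approx) auto
    also have "\<dots> = B n" unfolding B_def
      by (simp add: field_simps power_mult_distrib del: fact_Suc) (simp add: algebra_simps)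
    finally show ?thesis .
  qed
  have "norm (wt b t * a - scA (exp ?z - 1) a) = norm (\<Sum>n. scA (c n) (pw b n * a - a))"
    using s3 sums_unique by metis
  also have "\<dots> \<le> (\<Sum>n. B n)" by (rule norm_suminf_le[OF nb sums_summable[OF sB]])
  also have "\<dots> = \<bar>t\<bar> * ?d * exp (\<bar>t\<bar> * ?M)" using sB sums_unique by metis
  finally show ?thesis by (simp add: algebra_simps)
qed

end



context dsa begin

lemma main:
  fixes g :: "real \<Rightarrow> complex" and le :: "'i \<Rightarrow> 'i \<Rightarrow> bool" and b :: "'i \<Rightarrow> 'a"
  assumes tau: "log (real k) rr < \<tau>"
    and gi: "integrable lborel g" and ge: "integrable lborel (\<lambda>t. cmod (g t) * exp (\<bar>t\<bar> powr \<tau>))"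
    and f0: "inv_fourier g 0 = 0" and f1: "inv_fourier g 1 = 1"
    and Mb: "\<forall>\<alpha>. norm (b \<alpha>) \<le> M" and M0: "M \<ge> 0"
    and conv: "net_lim le (\<lambda>\<alpha>. norm (b \<alpha> * a - a)) 0"
    and sa: "\<forall>\<alpha>. stA (b \<alpha>) = b \<alpha>"
  shows "net_lim le (\<lambda>\<alpha>. norm (fcalc scA g (b \<alpha>) * a - a)) 0"
proof -
  obtain K where Kpos: "K > 0" and K: "\<And>b t. stA b = b \<Longrightarrow> norm b \<le> M \<Longrightarrow> norm (wt b t) \<le> K * exp (\<bar>t\<bar> powr \<tau>)"
    using growth[OF tau M0] by blast
  define M1 where "M1 = max 1 M"
  have gm[measurable]: "g \<in> borel_measurable lborel" by (rule borel_measurable_integrable[OF gi])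
  define E where "E t = exp (\<i> * complex_of_real t)" for t
  have Em[measurable]: "E \<in> borel_measurable lborel" unfolding E_def
    by measurable
  have Enorm: "cmod (E t) = 1" for t unfolding E_def by simp
  have gEi: "integrable lborel (\<lambda>t. g t * E t)"
  proof (rule Bochner_Integration.integrable_bound[OF gi])
    show "(\<lambda>t. g t * E t) \<in> borel_measurable lborel" by measurable
  qed (auto simp: norm_mult Enorm)
  have c0: "(LINT t|lborel. g t) = 0"
    using f0 unfolding inv_fourier_def by simp
  have c1: "(LINT t|lborel. g t * E t) = 2 * pi"
    using f1 unfolding inv_fourier_def E_def by (simp add: field_simps)
  define G where "G t = g t * (E t - 1)" for t
  have Gi: "integrable lborel G" unfolding G_def using gEi gi by (simp add: right_diff_distrib)
  have GI: "(LINT t|lborel. G t) = 2 * pi" unfolding G_def using gEi gi c0 c1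
    by (simp add: right_diff_distrib)
  have Ghas: "(G has_integral complex_of_real (2 * pi)) UNIV"
    using has_integral_integral_lborel[OF Gi] GI by simp
  have Ga: "((\<lambda>t. scA (G t) a) has_integral (2 * pi) *\<^sub>R a) UNIV"
    using has_integral_linear[OF Ghas bl_sc_left[of a]] sc_real[of "2 * pi" a] by (simp add: o_def)
  define \<Phi> where "\<Phi> \<delta> t = cmod (g t) * min (\<bar>t\<bar> * exp (\<bar>t\<bar> * M1) * \<delta>) ((K * exp (\<bar>t\<bar> powr \<tau>) + 2) * norm a)" for \<delta> t
  define W where "W t = K * norm a * (cmod (g t) * exp (\<bar>t\<bar> powr \<tau>)) + 2 * norm a * cmod (g t)" for t
  have Wi: "integrable lborel W" unfolding W_def using ge gi by auto
  have \<Phi>m: "\<Phi> \<delta> \<in> borel_measurable lborel" for \<delta> unfolding \<Phi>_def by measurable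
  have \<Phi>W: "norm (\<Phi> \<delta> t) \<le> W t" if "\<delta> \<ge> 0" for \<delta> t
  proof -
    have "0 \<le> \<Phi> \<delta> t" unfolding \<Phi>_def using that Kpos by auto
    moreover have "\<Phi> \<delta> t \<le> cmod (g t) * ((K * exp (\<bar>t\<bar> powr \<tau>) + 2) * norm a)"
      unfolding \<Phi>_def by (intro mult_left_mono) auto
    ultimately show ?thesis unfolding W_def by (simp add: algebra_simps)
  qed
  have \<Phi>i: "integrable lborel (\<Phi> \<delta>)" if "\<delta> \<ge> 0" for \<delta>
    by (rule Bochner_Integration.integrable_bound[OF Wi \<Phi>m]) (use \<Phi>W[OF that] in \<open>auto intro!: AE_I2 intro: order_trans[OF _ abs_ge_self]\<close>)
  define \<Psi> where "\<Psi> \<delta> = (LINT t|lborel. \<Phi> \<delta> t)" for \<delta>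
  have \<Psi>mono: "\<Psi> \<delta> \<le> \<Psi> \<delta>'" if "0 \<le> \<delta>" "\<delta> \<le> \<delta>'" for \<delta> \<delta>'
    unfolding \<Psi>_def
  proof (rule integral_mono[OF \<Phi>i[OF that(1)] \<Phi>i])
    show "0 \<le> \<delta>'" using that by simp
    fix t
    have mn: "\<bar>t\<bar> * exp (\<bar>t\<bar> * M1) * \<delta> \<le> \<bar>t\<bar> * exp (\<bar>t\<bar> * M1) * \<delta>'" using that by (intro mult_left_mono) auto
    show "\<Phi> \<delta> t \<le> \<Phi> \<delta>' t" unfolding \<Phi>_def by (rule mult_left_mono[OF min.mono[OF mn order_refl]]) auto
  qed
  have \<Psi>lim: "(\<lambda>n. \<Psi> (inverse (real (Suc n)))) \<longlonglongrightarrow> 0"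
  proof -
    have "(\<lambda>n. LINT t|lborel. \<Phi> (inverse (real (Suc n))) t) \<longlonglongrightarrow> (LINT (t::real)|lborel. (0::real))"
    proof (rule integral_dominated_convergence[where s="\<lambda>n. \<Phi> (inverse (real (Suc n)))" and w=W and f="\<lambda>t. 0"])
      show "(\<lambda>t. 0::real) \<in> borel_measurable lborel" by simp
      show "integrable lborel W" by (rule Wi)
      show "\<Phi> (inverse (real (Suc n))) \<in> borel_measurable lborel" for n by (rule \<Phi>m)
      show "AE t in lborel. norm (\<Phi> (inverse (real (Suc n))) t) \<le> W t" for n
        using \<Phi>W[of "inverse (real (Suc n))"] by auto
      show "AE t in lborel. (\<lambda>n. \<Phi> (inverse (real (Suc n))) t) \<longlonglongrightarrow> 0"
      proof (rule AE_I2)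
        fix t
        have "(\<lambda>n. \<Phi> (inverse (real (Suc n))) t) \<longlonglongrightarrow> cmod (g t) * min (\<bar>t\<bar> * exp (\<bar>t\<bar> * M1) * 0) ((K * exp (\<bar>t\<bar> powr \<tau>) + 2) * norm a)"
          unfolding \<Phi>_def by (intro tendsto_intros LIMSEQ_inverse_real_of_nat)
        moreover have "min (\<bar>t\<bar> * exp (\<bar>t\<bar> * M1) * 0) ((K * exp (\<bar>t\<bar> powr \<tau>) + 2) * norm a) = 0"
          using Kpos by (simp add: min_def)
        ultimately show "(\<lambda>n. \<Phi> (inverse (real (Suc n))) t) \<longlonglongrightarrow> 0" by simp
      qed
    qed
    then show ?thesis by (simp add: \<Psi>_def)
  qed
  have key: "norm (fcalc scA g (b \<alpha>) * a - a) \<le> \<Psi> (norm (b \<alpha> * a - a)) / (2 * pi)" for \<alpha>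
  proof -
    let ?b = "b \<alpha>" let ?\<epsilon> = "norm (b \<alpha> * a - a)"
    define F where "F t = scA (g t) (wt ?b t)" for t
    have bK: "norm (wt ?b t) \<le> K * exp (\<bar>t\<bar> powr \<tau>)" for t using K sa Mb by blast
    have Fi: "F integrable_on UNIV" unfolding F_def by (rule univ_int[OF gi bK ge])
    have fc: "fcalc scA g ?b = (1 / (2 * pi)) *\<^sub>R integral UNIV F"
      unfolding fcalc_def F_def wt_def expm1_A_eq ..
    define D where "D t = F t * a - scA (G t) a" for t
    have Dhas: "(D has_integral (integral UNIV F * a - (2 * pi) *\<^sub>R a)) UNIV"
      unfolding D_def by (intro has_integral_diff has_integral_mult_left Ga integrable_integral Fi)
    have eq1: "fcalc scA g ?b * a - a = (1 / (2 * pi)) *\<^sub>R integral UNIV D"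
      using integral_unique[OF Dhas] fc by (simp add: scaleR_diff_right)
    have Dt: "D t = scA (g t) (wt ?b t * a - scA (E t - 1) a)" for t
      unfolding D_def F_def G_def by (simp add: sc_ml sc_mult sc_diff)
    have Dn: "norm (D t) \<le> \<Phi> ?\<epsilon> t" for t
    proof -
      have n1: "norm (wt ?b t * a - scA (E t - 1) a) \<le> \<bar>t\<bar> * exp (\<bar>t\<bar> * M1) * ?\<epsilon>"
      proof -
        have "norm (wt ?b t * a - scA (E t - 1) a) \<le> \<bar>t\<bar> * exp (\<bar>t\<bar> * max 1 (norm ?b)) * ?\<epsilon>"
          using pointwise_bound[of ?b t a] unfolding E_def .
        also have "\<dots> \<le> \<bar>t\<bar> * exp (\<bar>t\<bar> * M1) * ?\<epsilon>"
          using Mb unfolding M1_def by (intro mult_right_mono mult_left_mono) (auto intro!: mult_left_mono max.mono)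
        finally show ?thesis .
      qed
      have n2: "norm (wt ?b t * a - scA (E t - 1) a) \<le> (K * exp (\<bar>t\<bar> powr \<tau>) + 2) * norm a"
      proof -
        have "norm (wt ?b t * a - scA (E t - 1) a) \<le> norm (wt ?b t) * norm a + cmod (E t - 1) * norm a"
          using norm_triangle_ineq4[of "wt ?b t * a" "scA (E t - 1) a"] norm_mult_ineq[of "wt ?b t" a]
          by (simp add: norm_sc)
        also have "\<dots> \<le> K * exp (\<bar>t\<bar> powr \<tau>) * norm a + 2 * norm a"
        proof (intro add_mono mult_right_mono)
          show "cmod (E t - 1) \<le> 2" using norm_triangle_ineq4[of "E t" 1] Enorm[of t] by simp
        qed (use bK in auto)
        finally show ?thesis by (simp add: algebra_simps)
      qed
      show ?thesis unfolding Dt \<Phi>_def norm_sc using n1 n2 by (intro mult_left_mono) auto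
    qed
    have "norm (integral UNIV D) \<le> integral UNIV (\<Phi> ?\<epsilon>)"
      by (rule integral_norm_bound_integral[OF has_integral_integrable[OF Dhas] integrable_on_lborel[OF \<Phi>i] Dn]) auto
    also have "\<dots> = \<Psi> ?\<epsilon>" unfolding \<Psi>_def by (rule integral_lborel[OF \<Phi>i]) simp
    finally have "norm (integral UNIV D) \<le> \<Psi> ?\<epsilon>" .
    then show ?thesis unfolding eq1 by (simp add: divide_simps)
  qed
  show ?thesis unfolding net_lim_def
  proof (intro allI impI)
    fix e :: real assume e: "e > 0"
    obtain n where n: "\<Psi> (inverse (real (Suc n))) < 2 * pi * e"
      using \<Psi>lim e unfolding LIMSEQ_iff by (metis (no_types) abs_less_iff diff_zero le_refl mult_pos_pos pi_gt_zero real_norm_def zero_less_numeral)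
    obtain \<alpha>0 where \<alpha>0: "\<And>\<alpha>. le \<alpha>0 \<alpha> \<Longrightarrow> \<bar>norm (b \<alpha> * a - a) - 0\<bar> < inverse (real (Suc n))"
      using conv unfolding net_lim_def by (metis inverse_positive_iff_positive of_nat_0_less_iff zero_less_Suc)
    show "\<exists>\<alpha>0. \<forall>\<alpha>. le \<alpha>0 \<alpha> \<longrightarrow> \<bar>norm (fcalc scA g (b \<alpha>) * a - a) - 0\<bar> < e"
    proof (intro exI allI impI)
      fix \<alpha> assume "le \<alpha>0 \<alpha>"
      then have "norm (b \<alpha> * a - a) \<le> inverse (real (Suc n))" using \<alpha>0 by force
      then have "\<Psi> (norm (b \<alpha> * a - a)) \<le> \<Psi> (inverse (real (Suc n)))" by (intro \<Psi>mono) auto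
      then have "\<Psi> (norm (b \<alpha> * a - a)) / (2 * pi) < e" using n by (simp add: divide_simps mult.commute)
      then show "\<bar>norm (fcalc scA g (b \<alpha>) * a - a) - 0\<bar> < e" using key[of \<alpha>] by simp
    qed
  qed
qed

end

theorem lemma3p21:
  fixes scA :: "complex \<Rightarrow> 'a::{banach,real_normed_algebra} \<Rightarrow> 'a" and stA :: "'a \<Rightarrow> 'a"
    and scB :: "complex \<Rightarrow> 'b::{banach,real_normed_algebra} \<Rightarrow> 'b" and stB :: "'b \<Rightarrow> 'b"
    and \<iota> :: "'a \<Rightarrow> 'b"
    and k :: nat and p q \<tau> :: real
    and g f :: "real \<Rightarrow> complex"
    and le :: "'i \<Rightarrow> 'i \<Rightarrow> bool" and b :: "'i \<Rightarrow> 'a"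
  assumes "kpq_differential_subalgebra k p q scA stA scB stB \<iota>"
    and "log (real k) (max (real k - 1) p) < \<tau>" and "\<tau> < 1"
    and "D_tau \<tau> g" and "f = inv_fourier g" and "f 0 = 0" and "f 1 = 1"
    and "bounded_approx_identity le b" and "\<forall>\<alpha>. stA (b \<alpha>) = b \<alpha>"
  shows "\<forall>a. net_lim le (\<lambda>\<alpha>. norm (fcalc scA g (b \<alpha>) * a - a)) 0"
proof
  fix a
  obtain C where C: "C > 0" "\<forall>a. norm (pw a (k - 1)) \<le> C * norm a powr p * norm (\<iota> a) powr q"
    using assms(1) unfolding kpq_differential_subalgebra_def by blast
  interpret dsa scA stA scB stB \<iota> k p q C
    using assms(1) C unfolding kpq_differential_subalgebra_def by unfold_locales auto
  have tau: "log (real k) rr < \<tau>" using assms(2) by (simp add: rr_def)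
  have gi: "integrable lborel g" and ge: "integrable lborel (\<lambda>t. cmod (g t) * exp (\<bar>t\<bar> powr \<tau>))"
    using assms(4) unfolding D_tau_def by auto
  have f0: "inv_fourier g 0 = 0" and f1: "inv_fourier g 1 = 1" using assms(5-7) by auto
  obtain M where M: "\<forall>\<alpha>. norm (b \<alpha>) \<le> M" using assms(8) unfolding bounded_approx_identity_def by blast
  have M': "\<forall>\<alpha>. norm (b \<alpha>) \<le> max M 0" using M by (meson max.coboundedI1)
  have conv: "net_lim le (\<lambda>\<alpha>. norm (b \<alpha> * a - a)) 0"
    using assms(8) unfolding bounded_approx_identity_def by blast
  show "net_lim le (\<lambda>\<alpha>. norm (fcalc scA g (b \<alpha>) * a - a)) 0"
    by (rule main[OF tau gi ge f0 f1 M' _ conv assms(9)]) simp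
qed

end
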